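(* Let $q$ be a prime power, $k,b$ positive integers, and $\boldsymbol{x},\boldsymbol{y}\in\mathbb{F}_q^k$ with $0<d_b(\boldsymbol{x},\boldsymbol{y})<k$. Then $d_{b+1}(\boldsymbol{x},\boldsymbol{y})\ge d_b(\boldsymbol{x},\boldsymbol{y})+1$.
   Context: For $\boldsymbol{x}=(x_0,\ldots,x_{k-1})$, $\boldsymbol{y}=(y_0,\ldots,y_{k-1})\in\mathbb{F}_q^k$ and a positive integer $c$, the $c$-symbol distance $d_c(\boldsymbol{x},\boldsymbol{y})$ is the number of indices $i\in\{0,\ldots,k-1\}$ with $(x_i,x_{i+1},\ldots,x_{i+c-1})\ne(y_i,y_{i+1},\ldots,y_{i+c-1})$, indices taken modulo $k$. *)

theory Defs
  imports Main
begin

text \<open>Vectors in F_q^k are lists of length k over a finite field type.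
  The c-window of x at position i is the tuple (x_i, ..., x_{i+c-1}), indices mod k.\<close>

definition window :: "'a list \<Rightarrow> nat \<Rightarrow> nat \<Rightarrow> 'a list" where
  "window x c i = map (\<lambda>j. x ! ((i + j) mod length x)) [0..<c]"

definition sym_dist :: "nat \<Rightarrow> 'a list \<Rightarrow> 'a list \<Rightarrow> nat" where
  "sym_dist c x y = card {i. i < length x \<and> window x c i \<noteq> window y c i}"

end

theory Submission
  imports Defs
begin

lemma window_neq_iff:
  assumes "length x = k" "length y = k"
  shows "(window x c i \<noteq> window y c i) \<longleftrightarrow>
         (\<exists>j<c. x ! ((i + j) mod k) \<noteq> y ! ((i + j) mod k))"
  using assms unfolding window_def by (auto simp: map_eq_conv)

theorem proposition2p1:
  fixes x y :: "'a::{finite, field} list" and k b :: nat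
  assumes "k > 0" and "b > 0"
    and "length x = k" and "length y = k"
    and "0 < sym_dist b x y" and "sym_dist b x y < k"
  shows "sym_dist (b + 1) x y \<ge> sym_dist b x y + 1"
proof -
  define P where "P c i \<longleftrightarrow> (\<exists>j<c. x ! ((i + j) mod k) \<noteq> y ! ((i + j) mod k))" for c i
  have per: "P c (i mod k) = P c i" for c i
    unfolding P_def by (simp add: mod_add_left_eq)
  have SD: "sym_dist c x y = card {i. i < k \<and> P c i}" for c
    unfolding sym_dist_def P_def using window_neq_iff[OF assms(3,4)] assms(3) by simp
  have fin: "finite {i. i < k \<and> P c i}" for c by simp
  have sub: "{i. i < k \<and> P b i} \<subseteq> {i. i < k \<and> P (b+1) i}"
    unfolding P_def by (auto intro: less_SucI)
  have "{i. i < k \<and> P b i} \<noteq> {}" using assms(5) SD by (metis card.empty less_irrefl)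
  then obtain i1 where i1: "i1 < k" "P b i1" by auto
  have "{i. i < k \<and> P b i} \<noteq> {..<k}" using assms(6) SD by (metis card_lessThan less_irrefl)
  then obtain i0 where i0: "i0 < k" "\<not> P b i0" by auto
  have "\<exists>i. \<not> P b i \<and> P b (Suc i)"
  proof (rule ccontr)
    assume "\<not> ?thesis"
    hence st: "\<not> P b i \<Longrightarrow> \<not> P b (Suc i)" for i by blast
    have "\<not> P b (i0 + n)" for n by (induction n) (auto simp: i0 st)
    from this[of "i1 + k - i0"] have "\<not> P b (i1 + k)" using i0 by simp
    moreover have "P b (i1 + k) = P b i1" using per[of b "i1+k"] per[of b i1] by simp
    ultimately show False using i1 by simp
  qed
  then obtain i where i: "\<not> P b i" "P b (Suc i)" by blast
  have "P (b+1) i"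
  proof -
    from i(2) obtain j where "j < b" "x ! ((Suc i + j) mod k) \<noteq> y ! ((Suc i + j) mod k)"
      unfolding P_def by blast
    thus ?thesis unfolding P_def by (intro exI[of _ "Suc j"]) auto
  qed
  hence m: "i mod k \<in> {i. i < k \<and> P (b+1) i} - {i. i < k \<and> P b i}"
    using per i(1) assms(1) by auto
  have "card {i. i < k \<and> P b i} < card {i. i < k \<and> P (b+1) i}"
    by (rule psubset_card_mono[OF fin]) (use sub m in blast)
  thus ?thesis using SD by simp
qed

end
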